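(* Let $\omega_a,\omega_c,\kappa,\lambda>0$ and $N>0$, and assume $4\lambda^2\neq\omega_a\omega_c\big(1+\kappa^2/\omega_c^2\big)$. Define the real $4\times4$ matrices $$A=\begin{pmatrix}-\kappa&\omega_c&0&0\\-\omega_c&-\kappa&-2\sqrt2\,\lambda&0\\0&0&0&-\omega_a\\ \sqrt2\,\lambda&0&\omega_a&0\end{pmatrix},\qquad D=\frac{\kappa}{N}\begin{pmatrix}1&0&0&0\\0&1&0&0\\0&0&0&0\\0&0&0&0\end{pmatrix}.$$ Then every real symmetric $4\times 4$ matrix $V$ satisfying the Lyapunov equation $AV+VA^{T}=-D$ satisfies $$\frac12\big(V_{11}+V_{22}\big)-\frac{1}{2N}=\frac{1}{2N}\,\frac{\lambda^2}{\omega_a\omega_c-\dfrac{4\lambda^2}{1+\kappa^2/\omega_c^2}}.$$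
   Context: $A$ is the linearization of the mean-field dynamics of the dissipative Kerr quantum Rabi model around the normal phase in the variables $(\delta Q,\delta P,\delta X,\delta Y)$, $D$ is the vacuum-noise diffusion matrix acting on the cavity quadratures, and $V$ is the steady-state covariance matrix; the quantity $\frac12(V_{11}+V_{22})-\frac1{2N}$ is the normal-phase photon-number fluctuation $\langle\delta\alpha^\dagger\delta\alpha\rangle$. *)

theory Defs
  imports "HOL-Analysis.Analysis"
begin

text \<open>Real 4x4 matrices as real^4^4, built row by row with the library's
  vector construction; entry (k,l) of the paper is M $ k $ l for k,l in 1..4.\<close>

definition kerrA :: "real \<Rightarrow> real \<Rightarrow> real \<Rightarrow> real \<Rightarrow> real ^ 4 ^ 4" where
  "kerrA wa wc kap lam = vector
     [vector [-kap, wc, 0, 0],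
      vector [-wc, -kap, -2 * sqrt 2 * lam, 0],
      vector [0, 0, 0, -wa],
      vector [sqrt 2 * lam, 0, wa, 0]]"

definition kerrD :: "real \<Rightarrow> real \<Rightarrow> real ^ 4 ^ 4" where
  "kerrD kap N = (kap / N) *\<^sub>R vector
     [vector [1, 0, 0, 0],
      vector [0, 1, 0, 0],
      vector [0, 0, 0, 0],
      vector [0, 0, 0, 0]]"

lemma kerrA_check: "kerrA a c k l $ 2 $ 3 = -2 * sqrt 2 * l" "kerrA a c k l $ 4 $ 1 = sqrt 2 * l"
  "kerrA a c k l $ 4 $ 3 = a"
  by (simp_all add: kerrA_def vector_def)

end

theory Submission imports Defs begin
lemma kA: "kerrA wa wc kap lam $ 1 $ 1 = -kap" "kerrA wa wc kap lam $ 1 $ 2 = wc" 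
  "kerrA wa wc kap lam $ 1 $ 3 = 0" "kerrA wa wc kap lam $ 1 $ 4 = 0"
  "kerrA wa wc kap lam $ 2 $ 1 = -wc" "kerrA wa wc kap lam $ 2 $ 2 = -kap" 
  "kerrA wa wc kap lam $ 2 $ 3 = -2 * sqrt 2 * lam" "kerrA wa wc kap lam $ 2 $ 4 = 0"
  "kerrA wa wc kap lam $ 3 $ 1 = 0" "kerrA wa wc kap lam $ 3 $ 2 = 0" 
  "kerrA wa wc kap lam $ 3 $ 3 = 0" "kerrA wa wc kap lam $ 3 $ 4 = -wa"
  "kerrA wa wc kap lam $ 4 $ 1 = sqrt 2 * lam" "kerrA wa wc kap lam $ 4 $ 2 = 0" 
  "kerrA wa wc kap lam $ 4 $ 3 = wa" "kerrA wa wc kap lam $ 4 $ 4 = 0"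
  by (simp_all add: kerrA_def vector_def)
lemma kD: "kerrD kap N $ i $ j = (if i = j \<and> (i = 1 \<or> i = 2) then kap / N else 0)"
proof -
  have "i = 1 \<or> i = 2 \<or> i = 3 \<or> i = 4" "j = 1 \<or> j = 2 \<or> j = 3 \<or> j = 4"
    using exhaust_4 by auto
  then show ?thesis by (auto simp: kerrD_def vector_def)
qed

lemma entry: "(A ** V + V ** transpose A) $ i $ j =
   A$i$1 * V$1$j + A$i$2 * V$2$j + A$i$3 * V$3$j + A$i$4 * V$4$j
 + (V$i$1 * A$j$1 + V$i$2 * A$j$2 + V$i$3 * A$j$3 + V$i$4 * A$j$4)"
  for A V :: "real^4^4"
  by (simp add: matrix_matrix_mult_def transpose_def sum_4)

theorem mainTheorem2:
  fixes wa wc kap lam N :: real and V :: "real ^ 4 ^ 4"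
  assumes "wa > 0" "wc > 0" "kap > 0" "lam > 0" "N > 0"
    and "4 * lam\<^sup>2 \<noteq> wa * wc * (1 + kap\<^sup>2 / wc\<^sup>2)"
    and "transpose V = V"
    and "kerrA wa wc kap lam ** V + V ** transpose (kerrA wa wc kap lam) = - kerrD kap N"
  shows "(V $ 1 $ 1 + V $ 2 $ 2) / 2 - 1 / (2 * N)
         = 1 / (2 * N) * (lam\<^sup>2 / (wa * wc - 4 * lam\<^sup>2 / (1 + kap\<^sup>2 / wc\<^sup>2)))"
proof -
  have sym: "V $ j $ i = V $ i $ j" for i j
    proof -
    have "V $ j $ i = transpose V $ i $ j" by (simp add: transpose_def)
    then show ?thesis using assms(7) by simp
  qed
  have EE: "(kerrA wa wc kap lam ** V + V ** transpose (kerrA wa wc kap lam)) $ i $ j = - (kerrD kap N $ i $ j)" for i j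
    using assms(8) by simp
  define s where "s = sqrt 2 * lam"
  define a where "a = V$1$1"
  define b where "b = V$1$2"
  define c where "c = V$1$3"
  define d where "d = V$1$4"
  define e where "e = V$2$2"
  define f where "f = V$2$3"
  define g where "g = V$2$4"
  define p where "p = V$3$4"
  note sy = sym[of 2 1] sym[of 3 1] sym[of 4 1] sym[of 3 2] sym[of 4 2] sym[of 4 3]
  note ss = entry kA kD sy a_def[symmetric] b_def[symmetric] c_def[symmetric] d_def[symmetric]
     e_def[symmetric] f_def[symmetric] g_def[symmetric] p_def[symmetric]
  have e11: "2 * (- kap * a + wc * b) = - kap / N"
    using EE[of 1 1, unfolded entry] by (simp add: ss algebra_simps)
  have e22: "2 * (- wc * b - kap * e - 2 * s * f) = - kap / N"
    using EE[of 2 2, unfolded entry] by (simp add: ss s_def algebra_simps)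
  have e12: "-2 * kap * b + wc * (e - a) - 2 * s * c = 0"
    using EE[of 1 2, unfolded entry] by (simp add: ss s_def algebra_simps)
  have e33: "p = 0"
    using EE[of 3 3, unfolded entry] assms(1) by (simp add: ss algebra_simps)
  have e44: "s * d + wa * p = 0"
    using EE[of 4 4, unfolded entry] by (simp add: ss s_def algebra_simps)
  have e13: "- kap * c + wc * f - wa * d = 0"
    using EE[of 1 3, unfolded entry] by (simp add: ss algebra_simps)
  have e14: "- kap * d + wc * g + s * a + wa * c = 0"
    using EE[of 1 4, unfolded entry] by (simp add: ss s_def algebra_simps)
  have e24: "- wc * d - kap * g - 2 * s * p + s * b + wa * f = 0"
    using EE[of 2 4, unfolded entry] by (simp add: ss s_def algebra_simps)
  have s2: "s^2 = 2 * lam^2" unfolding s_def by (simp add: power_mult_distrib)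
  have spos: "s > 0" unfolding s_def using assms(4) by simp
  have d0: "d = 0" using e44 e33 spos by simp
  have g1: "wc * g = - s * a - wa * c" using e14 d0 by simp
  have g2: "kap * g = s * b + wa * f" using e24 d0 e33 by simp
  have f1: "wc * f = kap * c" using e13 d0 by simp
  have b1: "wc * b = kap * a - kap / (2 * N)" using e11 by (simp add: field_simps)
  have "kap * (wc * g) = wc * (kap * g)" by simp
  then have "kap * (- s * a - wa * c) = s * (wc * b) + wa * (wc * f)"
    unfolding g1 g2 by (simp add: algebra_simps)
  then have "kap * (- s * a - wa * c) = s * (kap * a - kap / (2 * N)) + wa * (kap * c)"
    unfolding b1 f1 .
  then have "kap * (- 2 * (s * a) - 2 * wa * c + s / (2 * N)) = 0"
    by (simp add: algebra_simps)
  then have "- 2 * (s * a) - 2 * wa * c + s / (2 * N) = 0" using assms(3) by simp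
  then have A: "s * a = s / (4 * N) - wa * c" using assms(5) by (simp add: field_simps)
  have "kap * (a + e) + 2 * s * f = kap / N" using e11 e22 by (simp add: field_simps)
  then have "wc * (kap * (a + e) + 2 * s * f) = wc * (kap / N)" by simp
  then have "wc * (kap * (a + e)) + 2 * s * (wc * f) = wc * kap / N" by (simp add: algebra_simps)
  then have "kap * (wc * (a + e) + 2 * s * c - wc / N) = 0" unfolding f1 by (simp add: algebra_simps)
  then have U: "wc * (a + e) + 2 * s * c = wc / N" using assms(3) by simp
  have ee: "wc * e = wc / N - 2 * s * c - wc * a" using U by (simp add: algebra_simps)
  have "wc * s * (-2 * kap * b + wc * (e - a) - 2 * s * c) = 0" using e12 by simp
  then have "-2 * kap * s * (wc * b) + s * wc * (wc * e) - wc^2 * (s * a) - 2 * s^2 * wc * c = 0"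
    by (simp add: algebra_simps power2_eq_square)
  then have "-2 * kap * s * (kap * a - kap / (2 * N)) + s * wc * (wc / N - 2 * s * c - wc * a) - wc^2 * (s * a) - 2 * s^2 * wc * c = 0"
    unfolding b1 ee .
  then have "-2 * (kap^2 + wc^2) * (s * a) + (kap^2 + wc^2) * s / N - 4 * s^2 * wc * c = 0"
    by (simp add: algebra_simps power2_eq_square add_divide_distrib)
  then have "-2 * (kap^2 + wc^2) * (s / (4 * N) - wa * c) + (kap^2 + wc^2) * s / N - 4 * s^2 * wc * c = 0"
    unfolding A .
  then have key: "c * (8 * lam^2 * wc - 2 * wa * (wc^2 + kap^2)) = (wc^2 + kap^2) * s / (2 * N)"
    unfolding s2 by (simp add: algebra_simps add_divide_distrib)
  have nz: "8 * lam^2 * wc - 2 * wa * (wc^2 + kap^2) \<noteq> 0"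
  proof
    assume "8 * lam^2 * wc - 2 * wa * (wc^2 + kap^2) = 0"
    then have h: "4 * lam^2 * wc = wa * (wc^2 + kap^2)" by (simp add: algebra_simps)
    have "wa * wc * (1 + kap^2 / wc^2) = wa * (wc^2 + kap^2) / wc" using assms(2)
      by (simp add: field_simps power2_eq_square)
    also have "... = 4 * lam^2" unfolding h[symmetric] using assms(2) by simp
    finally have "4 * lam^2 = wa * wc * (1 + kap^2 / wc^2)" by simp
    then show False using assms(6) by simp
  qed
  have cc: "c = (wc^2 + kap^2) * s / (2 * N) / (8 * lam^2 * wc - 2 * wa * (wc^2 + kap^2))"
  proof -
    have "c = c * (8 * lam^2 * wc - 2 * wa * (wc^2 + kap^2)) / (8 * lam^2 * wc - 2 * wa * (wc^2 + kap^2))"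
      using nz by simp
    also have "... = (wc^2 + kap^2) * s / (2 * N) / (8 * lam^2 * wc - 2 * wa * (wc^2 + kap^2))"
      unfolding key ..
    finally show ?thesis .
  qed
  have ae: "a + e = 1 / N - 2 * s * c / wc" using U assms(2) by (simp add: field_simps)
  define M where "M = wa * (wc^2 + kap^2) - 4 * lam^2 * wc"
  have Mnz: "M \<noteq> 0" using nz unfolding M_def by (simp add: algebra_simps)
  have KM: "8 * lam^2 * wc - 2 * wa * (wc^2 + kap^2) = - 2 * M" unfolding M_def by (simp add: algebra_simps)
  have wk: "wc^2 + kap^2 > 0" using assms(2) by (simp add: add_pos_nonneg)
  have L: "(a + e) / 2 - 1 / (2 * N) = - (s * c) / wc" using ae assms(2) assms(5) by (simp add: field_simps)
  have sc: "s * c = - (lam^2 * (wc^2 + kap^2) / (2 * N * M))"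
    unfolding cc KM using s2 Mnz assms(5) by (simp add: field_simps power2_eq_square)
  have den: "wa * wc - 4 * lam^2 / (1 + kap^2 / wc^2) = wc * M / (wc^2 + kap^2)"
    unfolding M_def using assms(2) wk by (simp add: field_simps power2_eq_square)
  have R: "1 / (2 * N) * (lam\<^sup>2 / (wa * wc - 4 * lam\<^sup>2 / (1 + kap\<^sup>2 / wc\<^sup>2)))
      = lam^2 * (wc^2 + kap^2) / (2 * N * M) / wc"
    unfolding den using assms(2) wk Mnz by (simp add: field_simps)
  show ?thesis unfolding a_def[symmetric] e_def[symmetric] L R sc by simp
qed
end
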